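(* For all integers $k\ge 2$ and $n>1$, \[\mathcal{L}_n^k\simeq\bigvee_{1\le i<\min(k,n)}\mathrm{susp}\left(\mathcal{L}^k_{n-k-i}\right).\]
   Context: For $n\ge1$, $\mathcal{L}_n^k$ is the independence complex of the graph with vertex set $\{1,2,\dots,n\}$ in which two vertices $i<j$ are adjacent iff $j-i<k$ (the independence complex has the independent sets as simplices). For $n\le 0$, $\mathcal{L}_n^k=\emptyset$ (the empty complex), and $\mathrm{susp}(\emptyset)=S^0$. *)

theory Defs
  imports "HOL-Analysis.Analysis"
begin

text \<open>Abstract simplicial complexes on vertex set nat, given as sets of simplices
  (finite vertex sets, including the empty simplex).\<close>

text \<open>L_n^k: independence complex of the graph on {1..n} where i<j adjacent iff j-i<k.
  For n \<le> 0 the vertex set is empty and the complex is the empty complex {{}}.\<close>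
definition indep_L :: "nat \<Rightarrow> int \<Rightarrow> nat set set" where
  "indep_L k n = {\<sigma>. \<sigma> \<subseteq> {1..nat n} \<and> (\<forall>i\<in>\<sigma>. \<forall>j\<in>\<sigma>. i < j \<longrightarrow> k \<le> j - i)}"

text \<open>Suspension: join with S^0 (two new vertices 0 and 1; old vertices shifted by 2).\<close>
definition susp :: "nat set set \<Rightarrow> nat set set" where
  "susp K = {(\<lambda>v. v + 2) ` \<sigma> \<union> \<tau> | \<sigma> \<tau>. \<sigma> \<in> K \<and> \<tau> \<in> {{}, {0}, {1}}}"

text \<open>Wedge of complexes K i (i \<in> I), each based at vertex 0: disjoint copies glued at vertex 0.\<close>
definition wedge_enc :: "nat \<Rightarrow> nat \<Rightarrow> nat" where
  "wedge_enc i v = (if v = 0 then 0 else Suc (prod_encode (i, v)))"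

definition wedge :: "nat set \<Rightarrow> (nat \<Rightarrow> nat set set) \<Rightarrow> nat set set" where
  "wedge I K = (\<Union>i\<in>I. (\<lambda>\<sigma>. wedge_enc i ` \<sigma>) ` K i)"

text \<open>Geometric realization: barycentric-coordinate functions supported on a simplex,
  with the (product) topology of nat \<Rightarrow> real.\<close>
definition realization :: "nat set set \<Rightarrow> (nat \<Rightarrow> real) set" where
  "realization K = {f. (\<forall>v. 0 \<le> f v) \<and> finite {v. f v \<noteq> 0} \<and>
       sum f {v. f v \<noteq> 0} = 1 \<and> {v. f v \<noteq> 0} \<in> K}"

end

theory Submission
  imports Defs
begin


definition spt :: "(nat \<Rightarrow> real) \<Rightarrow> nat set" where "spt f = {v. f v \<noteq> 0}"

definition dclosed :: "nat set set \<Rightarrow> bool" where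
  "dclosed K \<longleftrightarrow> (\<forall>\<sigma>\<in>K. \<forall>\<tau>. \<tau> \<subseteq> \<sigma> \<longrightarrow> \<tau> \<in> K)"

lemma real_iff: "f \<in> realization K \<longleftrightarrow> (\<forall>v. 0 \<le> f v) \<and> finite (spt f) \<and> sum f (spt f) = 1 \<and> spt f \<in> K"
  by (simp add: realization_def spt_def)

lemma sum_spt: "finite W \<Longrightarrow> spt f \<subseteq> W \<Longrightarrow> sum f (spt f) = sum f W"
  by (rule sum.mono_neutral_left) (auto simp: spt_def)

lemma carrier_homotopic:
  fixes S :: "'a::topological_space set"
  assumes dc: "dclosed K"
    and cf: "continuous_on S f" "f ` S \<subseteq> realization K"
    and cg: "continuous_on S g" "g ` S \<subseteq> realization K"
    and car: "\<And>x. x \<in> S \<Longrightarrow> spt (f x) \<union> spt (g x) \<in> K"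
  shows "homotopic_with_canon (\<lambda>h. True) S (realization K) f g"
proof -
  define h where "h = (\<lambda>y::real\<times>'a. \<lambda>v. (1 - fst y) * f (snd y) v + fst y * g (snd y) v)"
  have cont: "continuous_on ({0..1} \<times> S) h"
    unfolding h_def
  proof (intro continuous_on_coordinatewise_then_product continuous_intros)
    fix v
    show "continuous_on ({0..1} \<times> S) (\<lambda>x. f (snd x) v)"
      by (rule continuous_on_product_then_coordinatewise[of _ "\<lambda>x. f (snd x)"])
         (rule continuous_on_compose2[OF cf(1) continuous_on_snd]; auto)
    show "continuous_on ({0..1} \<times> S) (\<lambda>x. g (snd x) v)"
      by (rule continuous_on_product_then_coordinatewise[of _ "\<lambda>x. g (snd x)"])
         (rule continuous_on_compose2[OF cg(1) continuous_on_snd]; auto)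
  qed
  have mem: "h y \<in> realization K" if y: "y \<in> {0..1} \<times> S" for y
  proof -
    obtain t x where yy: "y = (t,x)" "t \<in> {0..1}" "x \<in> S" using y by auto
    have fx: "f x \<in> realization K" and gx: "g x \<in> realization K" using cf cg yy by auto
    let ?W = "spt (f x) \<union> spt (g x)"
    have finW: "finite ?W" using fx gx by (auto simp: real_iff)
    have nn: "\<And>v. 0 \<le> h y v" using fx gx yy by (auto simp: real_iff h_def)
    have sub: "spt (h y) \<subseteq> ?W" by (auto simp: spt_def h_def yy)
    have "sum (h y) (spt (h y)) = sum (h y) ?W" using sub finW by (rule sum_spt[rotated])
    also have "\<dots> = (1 - t) * sum (f x) ?W + t * sum (g x) ?W"
      by (simp add: h_def yy sum.distrib sum_distrib_left)
    also have "sum (f x) ?W = 1" using fx finW sum_spt[of ?W "f x"] by (auto simp: real_iff)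
    also have "sum (g x) ?W = 1" using gx finW sum_spt[of ?W "g x"] by (auto simp: real_iff)
    finally have s1: "sum (h y) (spt (h y)) = 1" by simp
    have "spt (h y) \<in> K" using dc car[OF yy(3)] sub unfolding dclosed_def by blast
    then show ?thesis using nn s1 finite_subset[OF sub finW] by (auto simp: real_iff)
  qed
  have "continuous_map (prod_topology (top_of_set {0..1}) (top_of_set S)) (top_of_set (realization K)) h"
    using cont mem by (auto simp: continuous_map_in_subtopology)
  then show ?thesis unfolding homotopic_with_def
    by (intro exI[of _ h]) (simp add: h_def)
qed


definition push :: "(nat \<Rightarrow> nat) \<Rightarrow> nat set \<Rightarrow> (nat \<Rightarrow> real) \<Rightarrow> nat \<Rightarrow> real" where
  "push \<phi> W z u = (\<Sum>w\<in>{w\<in>W. \<phi> w = u}. z w)"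

lemma coord_cont: "continuous_on S (\<lambda>x. x v)"
  by (rule continuous_on_subset[OF continuous_on_product_coordinates]) auto

lemma push_cont: "finite W \<Longrightarrow> continuous_on S (push \<phi> W)"
  unfolding push_def
  by (intro continuous_on_coordinatewise_then_product continuous_on_sum ballI coord_cont)

lemma push_spt_eq:
  assumes W: "finite W" and z: "z \<in> realization K" and sub: "spt z \<subseteq> W"
  shows "push \<phi> W z u = (\<Sum>w\<in>{w\<in>spt z. \<phi> w = u}. z w)"
  unfolding push_def
  by (rule sum.mono_neutral_right) (use W sub in \<open>auto simp: spt_def\<close>)

lemma push_spt:
  assumes W: "finite W" and z: "z \<in> realization K" and sub: "spt z \<subseteq> W"
  shows "spt (push \<phi> W z) = \<phi> ` spt z"
proof -
  have nn: "\<And>v. 0 \<le> z v" and fin: "finite (spt z)" using z by (auto simp: real_iff)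
  show ?thesis
  proof (intro set_eqI iffI)
    fix u assume "u \<in> spt (push \<phi> W z)"
    then have "(\<Sum>w\<in>{w\<in>spt z. \<phi> w = u}. z w) \<noteq> 0"
      using push_spt_eq[OF W z sub] by (simp add: spt_def)
    then obtain w where "w \<in> {w\<in>spt z. \<phi> w = u}"
      by (meson sum.not_neutral_contains_not_neutral)
    then show "u \<in> \<phi> ` spt z" by blast
  next
    fix u assume "u \<in> \<phi> ` spt z"
    then obtain w where w: "w \<in> spt z" "\<phi> w = u" by blast
    have "0 < z w" using w nn by (simp add: spt_def less_le)
    moreover have "z w \<le> (\<Sum>w\<in>{w\<in>spt z. \<phi> w = u}. z w)"
      by (rule member_le_sum) (use w fin nn in simp_all)
    ultimately show "u \<in> spt (push \<phi> W z)"
      using push_spt_eq[OF W z sub] by (auto simp: spt_def)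
  qed
qed

lemma push_real:
  assumes W: "finite W" and z: "z \<in> realization K" and sub: "spt z \<subseteq> W"
    and L: "\<phi> ` spt z \<in> L"
  shows "push \<phi> W z \<in> realization L"
proof -
  have nn: "\<And>v. 0 \<le> z v" and fin: "finite (spt z)" and s1: "sum z (spt z) = 1"
    using z by (auto simp: real_iff)
  have "sum (push \<phi> W z) (spt (push \<phi> W z)) = (\<Sum>u\<in>\<phi> ` spt z. \<Sum>w\<in>{w\<in>spt z. \<phi> w = u}. z w)"
    using push_spt[OF W z sub] push_spt_eq[OF W z sub] by simp
  also have "\<dots> = sum z (spt z)" by (rule sum.image_gen[symmetric]) (rule fin)
  finally show ?thesis
    using push_spt[OF W z sub] s1 fin L nn
    by (auto simp: real_iff push_def intro!: sum_nonneg)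
qed

definition stretch :: "nat set \<Rightarrow> nat \<Rightarrow> (nat \<Rightarrow> real) \<Rightarrow> nat \<Rightarrow> real" where
  "stretch P q x u = (if u \<in> P then max 0 (2 * x u - 1) else if u = q then x u
      else x u / (1 - min (\<Sum>p\<in>P. x p) (1/2)))"

lemma stretch_cont: "finite P \<Longrightarrow> continuous_on S (stretch P q)"
  unfolding stretch_def
proof (intro continuous_on_coordinatewise_then_product)
  fix u assume P: "finite P"
  have c: "continuous_on S (\<lambda>x. x v)" for v :: nat
    by (rule continuous_on_subset[OF continuous_on_product_coordinates]) auto
  have d: "continuous_on S (\<lambda>x. x u / (1 - min (\<Sum>p\<in>P. x p) (1/2)))"
    by (intro continuous_intros c) (auto simp: min_def)
  show "continuous_on S (\<lambda>x. if u \<in> P then max 0 (2 * x u - 1) else if u = q then x u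
      else x u / (1 - min (\<Sum>p\<in>P. x p) (1/2)))"
    by (cases "u \<in> P"; cases "u = q") (auto intro!: continuous_intros c d)
qed

lemma stretch_id: "(\<forall>p\<in>P. x p = 0) \<Longrightarrow> stretch P q x = x"
  by (auto simp: stretch_def fun_eq_iff)

lemma stretch_spt: "(\<forall>v. 0 \<le> x v) \<Longrightarrow> spt (stretch P q x) \<subseteq> spt x"
  by (auto simp: stretch_def spt_def max_def)

lemma stretch_small: "p \<in> P \<Longrightarrow> x p \<le> 1/2 \<Longrightarrow> stretch P q x p = 0"
  by (auto simp: stretch_def max_def)

lemma stretch_real:
  assumes fP: "finite P" and qP: "q \<notin> P"
    and one: "\<And>\<sigma> a b. \<sigma> \<in> K \<Longrightarrow> a \<in> \<sigma> \<Longrightarrow> a \<in> P \<Longrightarrow> b \<in> \<sigma> \<Longrightarrow> b \<in> insert q P \<Longrightarrow> a = b"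
    and dc: "dclosed K"
    and x: "x \<in> realization K"
  shows "stretch P q x \<in> realization K"
proof -
  have nn: "\<And>v. 0 \<le> x v" and fin: "finite (spt x)" and s1: "sum x (spt x) = 1" and K: "spt x \<in> K"
    using x by (auto simp: real_iff)
  have sub: "spt (stretch P q x) \<subseteq> spt x" using stretch_spt nn by blast
  have nn2: "\<And>v. 0 \<le> stretch P q x v"
    using nn by (auto simp: stretch_def intro!: divide_nonneg_pos simp: min_def)
  have sum1: "sum (stretch P q x) (spt x) = 1"
  proof (cases "\<forall>p\<in>P. x p = 0")
    case True then show ?thesis using s1 stretch_id by simp
  next
    case False
    then obtain a where a: "a \<in> P" "x a \<noteq> 0" by blast
    have aspt: "a \<in> spt x" using a by (simp add: spt_def)
    have oth: "x b = 0" if "b \<in> insert q P" "b \<noteq> a" for b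
      using one[OF K aspt a(1), of b] that by (auto simp: spt_def)
    have S: "(\<Sum>p\<in>P. x p) = x a"
      by (subst sum.remove[OF fP a(1)]) (auto intro!: sum.neutral oth)
    define s where "s = x a"
    have s0: "0 < s" using a nn by (simp add: s_def less_le)
    have rest: "sum x (spt x - {a}) = 1 - s"
      using s1 sum.remove[OF fin aspt, of x] by (simp add: s_def)
    have s_le: "s \<le> 1" using rest sum_nonneg[of "spt x - {a}" x] nn by force
    have "sum (stretch P q x) (spt x) = stretch P q x a + sum (stretch P q x) (spt x - {a})"
      by (rule sum.remove[OF fin aspt])
    also have "sum (stretch P q x) (spt x - {a}) = sum (\<lambda>u. x u / (1 - min s (1/2))) (spt x - {a})"
    proof (rule sum.cong[OF refl])
      fix u assume u: "u \<in> spt x - {a}"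
      then have "u \<notin> insert q P" using oth by (auto simp: spt_def)
      then show "stretch P q x u = x u / (1 - min s (1/2))"
        by (simp add: stretch_def S s_def)
    qed
    also have "\<dots> = (1 - s) / (1 - min s (1/2))"
      by (simp add: sum_divide_distrib[symmetric] rest)
    also have "stretch P q x a = max 0 (2 * s - 1)" by (simp add: stretch_def a s_def)
    finally show ?thesis using s0 s_le
      by (cases "s \<le> 1/2") (auto simp: min_def max_def field_simps)
  qed
  have "sum (stretch P q x) (spt (stretch P q x)) = 1"
    using sum_spt[OF fin sub] sum1 by simp
  moreover have "spt (stretch P q x) \<in> K" using dc K sub by (auto simp: dclosed_def)
  ultimately show ?thesis using nn2 finite_subset[OF sub fin] by (auto simp: real_iff)
qed




lemma dclosedD: "dclosed K \<Longrightarrow> \<sigma> \<in> K \<Longrightarrow> \<tau> \<subseteq> \<sigma> \<Longrightarrow> \<tau> \<in> K"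
  unfolding dclosed_def by blast

lemma enc0[simp]: "wedge_enc i 0 = 0"
  by (simp add: wedge_enc_def)

lemma enc_eq0[simp]: "wedge_enc i v = 0 \<longleftrightarrow> v = 0" "0 = wedge_enc i v \<longleftrightarrow> v = 0"
  by (auto simp: wedge_enc_def)

lemma enc_eq: "wedge_enc i v = wedge_enc j w \<longleftrightarrow> (v = 0 \<and> w = 0) \<or> (v \<noteq> 0 \<and> i = j \<and> v = w)"
  by (auto simp: wedge_enc_def prod_encode_eq)

lemma dec_enc[simp]: "v \<noteq> 0 \<Longrightarrow> prod_decode (wedge_enc i v - 1) = (i, v)"
  by (simp add: wedge_enc_def)

lemma w_decomp:
  assumes "w \<noteq> 0"
  obtains i v where "prod_decode (w - Suc 0) = (i, v)" "w = Suc (prod_encode (i, v))"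
proof -
  obtain i v where d: "prod_decode (w - Suc 0) = (i, v)" by (cases "prod_decode (w - Suc 0)") auto
  have "prod_encode (i, v) = w - Suc 0" using d by (metis prod_decode_inverse)
  then have "w = Suc (prod_encode (i, v))" using assms by simp
  then show ?thesis using d that by blast
qed

lemma enc_Suc: "v \<noteq> 0 \<Longrightarrow> wedge_enc i v = Suc (prod_encode (i, v))"
  by (simp add: wedge_enc_def)

lemma wedge_susp_char:
  "\<sigma> \<in> wedge I (\<lambda>i. susp (B i)) \<longleftrightarrow>
    (\<exists>i\<in>I. \<exists>\<beta>\<in>B i. \<exists>\<tau>\<in>{{},{0},{1}}. \<sigma> = wedge_enc i ` ((\<lambda>v. v + 2) ` \<beta> \<union> \<tau>))"
  unfolding wedge_def susp_def by blast

locale cw =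
  fixes I :: "nat set" and q :: nat and p :: "nat \<Rightarrow> nat" and A0 :: "nat set set"
    and B :: "nat \<Rightarrow> nat set set" and sh :: "nat \<Rightarrow> nat \<Rightarrow> nat"
  assumes finI: "finite I" and Ine: "I \<noteq> {}"
    and A0_dc: "dclosed A0"
    and q_A0: "q \<notin> \<Union>A0" and p_A0: "i \<in> I \<Longrightarrow> p i \<notin> \<Union>A0"
    and pq: "i \<in> I \<Longrightarrow> p i \<noteq> q" and p_inj: "inj_on p I"
    and B_dc: "i \<in> I \<Longrightarrow> dclosed (B i)" and B_fin: "i \<in> I \<Longrightarrow> finite (\<Union>(B i))"
    and B_e: "i \<in> I \<Longrightarrow> {} \<in> B i"
    and sh_inj: "i \<in> I \<Longrightarrow> inj (sh i)" and sh_A0: "i \<in> I \<Longrightarrow> \<beta> \<in> B i \<Longrightarrow> sh i ` \<beta> \<in> A0"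
    and sh_q: "i \<in> I \<Longrightarrow> sh i v \<noteq> q" and sh_p: "i \<in> I \<Longrightarrow> j \<in> I \<Longrightarrow> sh i v \<noteq> p j"
begin

definition LK :: "nat set set" where
  "LK = {\<alpha> \<union> \<tau> | \<alpha> \<tau>. \<alpha> \<in> A0 \<and> \<tau> \<subseteq> {q}} \<union>
        (\<Union>i\<in>I. {sh i ` \<beta> \<union> \<tau> | \<beta> \<tau>. \<beta> \<in> B i \<and> \<tau> \<subseteq> {p i}})"

definition R :: "nat set set" where "R = wedge I (\<lambda>i. susp (B i))"

definition WR :: "nat set" where
  "WR = insert 0 (\<Union>i\<in>I. wedge_enc i ` (insert 1 ((\<lambda>v. v + 2) ` \<Union>(B i))))"

definition phi :: "nat \<Rightarrow> nat" where
  "phi w = (if w = 0 then q else case prod_decode (w - 1) of (i, v) \<Rightarrow> if v = 1 then p i else sh i (v - 2))"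

definition cc :: "real \<Rightarrow> real" where "cc s = 2 * min s (1/2) / (1 - min s (1/2))"

definition F :: "(nat \<Rightarrow> real) \<Rightarrow> nat \<Rightarrow> real" where
  "F x w = (if w = 0 then 1 - (\<Sum>i\<in>I. min 1 (2 * x (p i))) else
      case prod_decode (w - 1) of (i, v) \<Rightarrow>
        if i \<notin> I \<or> v = 0 then 0 else if v = 1 then max 0 (2 * x (p i) - 1)
        else x (sh i (v - 2)) * cc (x (p i)))"

definition G :: "(nat \<Rightarrow> real) \<Rightarrow> nat \<Rightarrow> real" where "G = push phi WR"

definition e0 :: "nat \<Rightarrow> real" where "e0 = (\<lambda>w. if w = 0 then 1 else 0)"

abbreviation T where "T i \<equiv> wedge_enc i 1"

abbreviation E where "E i \<beta> \<equiv> (\<lambda>v. wedge_enc i (v + 2)) ` \<beta>"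

lemma R_char: "\<sigma> \<in> R \<longleftrightarrow>
    (\<exists>i\<in>I. \<exists>\<beta>\<in>B i. \<exists>\<tau>\<in>{{},{0},{1}}. \<sigma> = wedge_enc i ` ((\<lambda>v. v + 2) ` \<beta> \<union> \<tau>))"
  unfolding R_def by (rule wedge_susp_char)

lemma phi_enc[simp]: "phi (wedge_enc i v) = (if v = 0 then q else if v = 1 then p i else sh i (v - 2))"
  by (simp add: phi_def wedge_enc_def)

lemma phi_0[simp]: "phi 0 = q"
  by (simp add: phi_def)

lemma F_0: "F x 0 = 1 - (\<Sum>i\<in>I. min 1 (2 * x (p i)))"
  by (simp add: F_def)

lemma F_enc: "v \<noteq> 0 \<Longrightarrow> F x (wedge_enc i v) = (if i \<notin> I then 0 else if v = 1 then max 0 (2 * x (p i) - 1)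
        else x (sh i (v - 2)) * cc (x (p i)))"
  by (simp add: F_def wedge_enc_def)

lemma F_other: "w \<noteq> 0 \<Longrightarrow> prod_decode (w - Suc 0) = (i, 0) \<Longrightarrow> F x w = 0"
  by (simp add: F_def)

lemma cc0[simp]: "cc 0 = 0" by (simp add: cc_def)

lemma LK_I1: "\<alpha> \<in> A0 \<Longrightarrow> \<tau> \<subseteq> {q} \<Longrightarrow> \<alpha> \<union> \<tau> \<in> LK"
  unfolding LK_def by blast

lemma LK_I2: "i \<in> I \<Longrightarrow> \<beta> \<in> B i \<Longrightarrow> \<tau> \<subseteq> {p i} \<Longrightarrow> sh i ` \<beta> \<union> \<tau> \<in> LK"
  unfolding LK_def by blast

lemma LK_E:
  assumes "\<sigma> \<in> LK"
  obtains (cone) \<alpha> \<tau> where "\<sigma> = \<alpha> \<union> \<tau>" "\<alpha> \<in> A0" "\<tau> \<subseteq> {q}"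
    | (apex) i \<beta> \<tau> where "i \<in> I" "\<beta> \<in> B i" "\<tau> \<subseteq> {p i}" "\<sigma> = sh i ` \<beta> \<union> \<tau>"
  using assms unfolding LK_def by blast

lemma R_I: "i \<in> I \<Longrightarrow> \<beta> \<in> B i \<Longrightarrow> \<tau> \<in> {{},{0},{1}} \<Longrightarrow> wedge_enc i ` ((\<lambda>v. v + 2) ` \<beta> \<union> \<tau>) \<in> R"
  unfolding R_char by blast

lemma R_E:
  assumes "\<sigma> \<in> R"
  obtains i \<beta> \<tau> where "i \<in> I" "\<beta> \<in> B i" "\<tau> \<in> {{},{0},{1}}" "\<sigma> = wedge_enc i ` ((\<lambda>v. v + 2) ` \<beta> \<union> \<tau>)"
  using assms unfolding R_char by blast

lemma dc_LK: "dclosed LK"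
  unfolding dclosed_def
proof (intro ballI allI impI)
  fix \<sigma> \<rho> assume s: "\<sigma> \<in> LK" and r: "\<rho> \<subseteq> \<sigma>"
  from s show "\<rho> \<in> LK"
  proof (cases rule: LK_E)
    case (cone \<alpha> \<tau>)
    have 1: "\<rho> \<inter> \<alpha> \<in> A0" by (rule dclosedD[OF A0_dc cone(2)]) blast
    have 2: "\<rho> = (\<rho> \<inter> \<alpha>) \<union> (\<rho> \<inter> \<tau>)" using cone r by blast
    have 3: "\<rho> \<inter> \<tau> \<subseteq> {q}" using cone by blast
    show ?thesis by (subst 2) (rule LK_I1[OF 1 3])
  next
    case (apex i \<beta> \<tau>)
    define \<beta>' where "\<beta>' = {v\<in>\<beta>. sh i v \<in> \<rho>}"
    have "\<beta>' \<subseteq> \<beta>" unfolding \<beta>'_def by blast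
    then have 1: "\<beta>' \<in> B i" by (rule dclosedD[OF B_dc[OF apex(1)] apex(2)])
    have 2: "\<rho> = sh i ` \<beta>' \<union> (\<rho> \<inter> \<tau>)" using apex r unfolding \<beta>'_def by blast
    have 3: "\<rho> \<inter> \<tau> \<subseteq> {p i}" using apex by blast
    show ?thesis by (subst 2) (rule LK_I2[OF apex(1) 1 3])
  qed
qed

lemma dc_R: "dclosed R"
  unfolding dclosed_def
proof (intro ballI allI impI)
  fix \<sigma> \<rho> assume s: "\<sigma> \<in> R" and r: "\<rho> \<subseteq> \<sigma>"
  obtain i \<beta> \<tau> where a: "i \<in> I" "\<beta> \<in> B i" "\<tau> \<in> {{},{0},{1}}" "\<sigma> = wedge_enc i ` ((\<lambda>v. v + 2) ` \<beta> \<union> \<tau>)"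
    using s by (rule R_E)
  define \<beta>' where "\<beta>' = {v\<in>\<beta>. wedge_enc i (v + 2) \<in> \<rho>}"
  define \<tau>' where "\<tau>' = {u\<in>\<tau>. wedge_enc i u \<in> \<rho>}"
  have "\<beta>' \<subseteq> \<beta>" unfolding \<beta>'_def by blast
  then have 1: "\<beta>' \<in> B i" by (rule dclosedD[OF B_dc[OF a(1)] a(2)])
  have 2: "\<tau>' \<in> {{},{0},{1}}"
  proof -
    have "\<tau>' \<subseteq> \<tau>" unfolding \<tau>'_def by blast
    then show ?thesis using a(3) by (auto simp: subset_singleton_iff)
  qed
  have 3: "\<rho> = wedge_enc i ` {u \<in> (\<lambda>v. v + 2) ` \<beta> \<union> \<tau>. wedge_enc i u \<in> \<rho>}"
    using a(4) r by blast
  have 4: "{u \<in> (\<lambda>v. v + 2) ` \<beta> \<union> \<tau>. wedge_enc i u \<in> \<rho>} = (\<lambda>v. v + 2) ` \<beta>' \<union> \<tau>'"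
    unfolding \<beta>'_def \<tau>'_def by blast
  show "\<rho> \<in> R" by (subst 3, subst 4) (rule R_I[OF a(1) 1 2])
qed

lemma fin_WR: "finite WR"
  unfolding WR_def using finI B_fin by auto

lemma R_WR: "\<sigma> \<in> R \<Longrightarrow> \<sigma> \<subseteq> WR"
  unfolding R_char WR_def by auto

lemma phi_simp: "\<sigma> \<in> R \<Longrightarrow> phi ` \<sigma> \<in> LK"
proof -
  assume "\<sigma> \<in> R"
  then obtain i \<beta> \<tau> where a: "i \<in> I" "\<beta> \<in> B i" "\<tau> \<in> {{},{0},{1}}" "\<sigma> = wedge_enc i ` ((\<lambda>v. v + 2) ` \<beta> \<union> \<tau>)"
    by (rule R_E)
  have im: "phi ` wedge_enc i ` ((\<lambda>v. v + 2) ` \<beta>) = sh i ` \<beta>" by (auto simp: image_image)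
  have A: "sh i ` \<beta> \<in> A0" using sh_A0 a by blast
  show ?thesis
  proof -
    consider "\<tau> = {}" | "\<tau> = {0}" | "\<tau> = {1}" using a(3) by blast
    then show ?thesis
    proof cases
      case 1 then have "phi ` \<sigma> = sh i ` \<beta> \<union> {}" using a im by (simp add: image_Un)
      then show ?thesis using LK_I1[OF A, of "{}"] by simp
    next
      case 2 then have "phi ` \<sigma> = sh i ` \<beta> \<union> {q}" using a im by (simp add: image_Un)
      then show ?thesis using LK_I1[OF A, of "{q}"] by simp
    next
      case 3 then have "phi ` \<sigma> = sh i ` \<beta> \<union> {p i}" using a im by (simp add: image_Un)
      then show ?thesis using LK_I2[OF a(1) a(2), of "{p i}"] by simp
    qed
  qed
qed

lemma G_cont: "continuous_on S G"
  unfolding G_def by (rule push_cont[OF fin_WR])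

lemma G_real: "z \<in> realization R \<Longrightarrow> G z \<in> realization LK"
  unfolding G_def
  by (rule push_real[OF fin_WR]) (use R_WR phi_simp in \<open>auto simp: real_iff\<close>)

lemma G_spt: "z \<in> realization R \<Longrightarrow> spt (G z) = phi ` spt z"
  unfolding G_def
  by (rule push_spt[OF fin_WR]) (use R_WR in \<open>auto simp: real_iff\<close>)

lemma cc_cont: "continuous_on S (\<lambda>x. cc (x a))"
  unfolding cc_def by (intro continuous_intros coord_cont) (auto simp: min_def)

lemma cc_nonneg: "0 \<le> s \<Longrightarrow> 0 \<le> cc s"
  unfolding cc_def by (auto simp: min_def)

lemma F_cont: "continuous_on S F"
proof (rule continuous_on_coordinatewise_then_product)
  fix w
  show "continuous_on S (\<lambda>x. F x w)"
  proof (cases "w = 0")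
    case True
    have "(\<lambda>x. F x w) = (\<lambda>x. 1 - (\<Sum>i\<in>I. min 1 (2 * x (p i))))"
      by (simp add: F_0 True fun_eq_iff)
    then show ?thesis by (simp only:) (intro continuous_intros coord_cont)
  next
    case False
    obtain i v where d: "prod_decode (w - Suc 0) = (i, v)" by (cases "prod_decode (w - Suc 0)") auto
    have eq: "(\<lambda>x. F x w) = (\<lambda>x. if i \<notin> I \<or> v = 0 then 0 else if v = 1 then max 0 (2 * x (p i) - 1)
        else x (sh i (v - 2)) * cc (x (p i)))"
      by (simp add: F_def d False fun_eq_iff)
    show ?thesis
      unfolding eq
      by (cases "i \<notin> I \<or> v = 0"; cases "v = 1") (simp_all add: continuous_intros coord_cont cc_cont)
  qed
qed

lemma LK_cases:
  assumes x: "x \<in> realization LK"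
  obtains (A) "\<forall>i\<in>I. x (p i) = 0" "\<exists>\<alpha>\<in>A0. spt x \<subseteq> insert q \<alpha>"
    | (B) i \<beta> where "i \<in> I" "\<beta> \<in> B i" "spt x = insert (p i) (sh i ` \<beta>)" "x (p i) > 0"
proof -
  have K: "spt x \<in> LK" and nn: "\<And>v. 0 \<le> x v" using x by (auto simp: real_iff)
  from K show ?thesis
  proof (cases rule: LK_E)
    case (cone \<alpha> \<tau>)
    have "x (p j) = 0" if "j \<in> I" for j
    proof -
      have "p j \<notin> \<alpha>" using p_A0[OF that] cone(2) by blast
      moreover have "p j \<notin> \<tau>" using pq[OF that] cone(3) by blast
      ultimately have "p j \<notin> spt x" using cone(1) by blast
      then show ?thesis by (simp add: spt_def)
    qed
    moreover have "spt x \<subseteq> insert q \<alpha>" using cone by blast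
    ultimately show ?thesis using A cone(2) by blast
  next
    case (apex i \<beta> \<tau>)
    have nsh: "p j \<notin> sh i ` \<beta>" if "j \<in> I" for j using sh_p[OF apex(1) that] by (metis imageE)
    show ?thesis
    proof (cases "p i \<in> spt x")
      case True
      then have "\<tau> = {p i}" using apex nsh[OF apex(1)] by blast
      then have "spt x = insert (p i) (sh i ` \<beta>)" using apex by blast
      moreover have "x (p i) > 0" using True nn[of "p i"] by (simp add: spt_def)
      ultimately show ?thesis using B apex by blast
    next
      case False
      then have e: "spt x = sh i ` \<beta>" using apex by blast
      have "x (p j) = 0" if "j \<in> I" for j
        using nsh[OF that] e by (auto simp: spt_def)
      moreover have "sh i ` \<beta> \<in> A0" using sh_A0 apex by blast
      ultimately show ?thesis using A e by blast
    qed
  qed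
qed

lemma F_caseA:
  assumes "\<forall>i\<in>I. x (p i) = 0"
  shows "F x = e0"
proof
  fix w
  show "F x w = e0 w"
  proof (cases "w = 0")
    case True
    then show ?thesis using assms by (simp add: F_0 e0_def)
  next
    case False
    obtain i v where d: "prod_decode (w - Suc 0) = (i, v)" by (cases "prod_decode (w - Suc 0)") auto
    show ?thesis using False assms by (simp add: F_def d e0_def)
  qed
qed

lemma e0_real: "e0 \<in> realization R"
proof -
  obtain i where i: "i \<in> I" using Ine by blast
  have "wedge_enc i ` ((\<lambda>v. v + 2) ` {} \<union> {0}) \<in> R" by (rule R_I[OF i B_e[OF i]]) simp
  then have "{0} \<in> R" by simp
  moreover have "spt e0 = {0}" by (auto simp: spt_def e0_def)
  ultimately show ?thesis by (auto simp: real_iff e0_def)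
qed

lemma enc_img: "wedge_enc i ` ((\<lambda>v. v + 2) ` \<beta> \<union> {u}) = insert (wedge_enc i u) (E i \<beta>)"
  by (auto simp: image_image)

lemma cc_arith: "0 < s \<Longrightarrow> s \<le> 1 \<Longrightarrow> (1 - min 1 (2 * s)) + (max 0 (2 * s - 1) + cc s * (1 - s)) = (1::real)"
proof (cases "s \<le> 1/2")
  case True
  assume "0 < s" "s \<le> 1"
  then have "cc s * (1 - s) = 2 * s" using True by (simp add: cc_def min_def)
  then show ?thesis using True by (simp add: min_def max_def)
next
  case False
  then have "cc s = 2" by (simp add: cc_def min_def)
  then show ?thesis using False by (simp add: min_def max_def)
qed

context
  fixes x :: "nat \<Rightarrow> real" and i :: nat and \<beta> :: "nat set"
  assumes x: "x \<in> realization LK" and i: "i \<in> I" and b: "\<beta> \<in> B i"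
    and sx: "spt x = insert (p i) (sh i ` \<beta>)" and s0: "x (p i) > 0"
begin

lemma xpj: "j \<in> I \<Longrightarrow> j \<noteq> i \<Longrightarrow> x (p j) = 0"
proof -
  assume j: "j \<in> I" "j \<noteq> i"
  have "p j \<noteq> p i" using p_inj i j by (auto simp: inj_on_def)
  moreover have "p j \<notin> sh i ` \<beta>" using sh_p[OF i j(1)] by (metis imageE)
  ultimately have "p j \<notin> spt x" using sx by blast
  then show ?thesis by (simp add: spt_def)
qed

lemma FB0: "F x 0 = 1 - min 1 (2 * x (p i))"
proof -
  have "(\<Sum>j\<in>I. min 1 (2 * x (p j))) = min 1 (2 * x (p i)) + (\<Sum>j\<in>I - {i}. min 1 (2 * x (p j)))"
    by (rule sum.remove[OF finI i])
  also have "(\<Sum>j\<in>I - {i}. min 1 (2 * x (p j))) = 0"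
    by (rule sum.neutral) (simp add: xpj)
  finally show ?thesis by (simp add: F_0)
qed

lemma FBT: "F x (T i) = max 0 (2 * x (p i) - 1)"
  using i by (simp add: F_enc)

lemma FBE: "F x (wedge_enc i (v + 2)) = x (sh i v) * cc (x (p i))"
  using i by (simp add: F_enc)

lemma FBo:
  assumes w: "w \<notin> insert 0 (insert (T i) (E i \<beta>))"
  shows "F x w = 0"
proof -
  have w0: "w \<noteq> 0" using w by auto
  obtain j v where d: "prod_decode (w - Suc 0) = (j, v)" and we: "w = Suc (prod_encode (j, v))"
    using w_decomp[OF w0] by blast
  show ?thesis
  proof (cases "j \<notin> I \<or> v = 0")
    case True then show ?thesis using w0 by (simp add: F_def d)
  next
    case False
    then have j: "j \<in> I" and v0: "v \<noteq> 0" by auto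
    have wenc: "w = wedge_enc j v" using we v0 by (simp add: enc_Suc)
    show ?thesis
    proof (cases "j = i")
      case False
      then show ?thesis using wenc v0 j xpj[OF j False] by (simp add: F_enc)
    next
      case True
      show ?thesis
      proof (cases "v = 1")
        case True then show ?thesis using wenc w \<open>j = i\<close> by blast
      next
        case False
        then have vv: "v = (v - 2) + 2" using v0 by simp
        have "v - 2 \<notin> \<beta>" using w wenc \<open>j = i\<close> vv by (metis image_eqI insertCI)
        then have "sh i (v - 2) \<notin> sh i ` \<beta>" using sh_inj[OF i] by (auto simp: inj_on_def)
        moreover have "sh i (v - 2) \<noteq> p i" using sh_p[OF i i] .
        ultimately have "x (sh i (v - 2)) = 0" using sx by (auto simp: spt_def)
        then show ?thesis using wenc \<open>j = i\<close> v0 False j by (simp add: F_enc)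
      qed
    qed
  qed
qed

lemma FB_spt: "spt (F x) \<subseteq> (if x (p i) \<le> 1/2 then insert 0 (E i \<beta>) else insert (T i) (E i \<beta>))"
proof
  fix w assume w: "w \<in> spt (F x)"
  then have nz: "F x w \<noteq> 0" by (simp add: spt_def)
  then have "w \<in> insert 0 (insert (T i) (E i \<beta>))" using FBo by blast
  then show "w \<in> (if x (p i) \<le> 1/2 then insert 0 (E i \<beta>) else insert (T i) (E i \<beta>))"
    using nz FB0 FBT by (auto simp: max_def min_def split: if_splits)
qed

lemma FB_real: "F x \<in> realization R"
proof -
  define s where "s = x (p i)"
  have nn: "\<And>v. 0 \<le> x v" and fin: "finite (spt x)" and s1: "sum x (spt x) = 1"
    using x by (auto simp: real_iff)
  have pnot: "p i \<notin> sh i ` \<beta>" using sh_p[OF i i] by (metis imageE)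
  have finsh: "finite (sh i ` \<beta>)" using fin sx by simp
  have finb: "finite \<beta>" using finite_imageD[OF finsh] sh_inj[OF i] by (auto simp: inj_on_def)
  have rest: "sum x (sh i ` \<beta>) = 1 - s"
    using s1 sx pnot finsh by (simp add: s_def)
  have s_le: "s \<le> 1" using rest sum_nonneg[of "sh i ` \<beta>" x] nn by force
  have injE: "inj_on (\<lambda>v. wedge_enc i (v + 2)) \<beta>" by (auto simp: inj_on_def enc_eq)
  have sumE: "sum (F x) (E i \<beta>) = cc s * (1 - s)"
  proof -
    have "sum (F x) (E i \<beta>) = (\<Sum>v\<in>\<beta>. F x (wedge_enc i (v + 2)))"
      by (subst sum.reindex[OF injE]) simp
    also have "\<dots> = (\<Sum>v\<in>\<beta>. x (sh i v) * cc s)"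
      by (intro sum.cong refl) (simp only: FBE s_def)
    also have "\<dots> = (\<Sum>v\<in>\<beta>. x (sh i v)) * cc s"
      by (simp add: sum_distrib_right)
    also have "(\<Sum>v\<in>\<beta>. x (sh i v)) = sum x (sh i ` \<beta>)"
      using sh_inj[OF i] by (subst sum.reindex) (auto simp: inj_on_def)
    finally show ?thesis using rest by simp
  qed
  define D where "D = insert 0 (insert (T i) (E i \<beta>))"
  have finD: "finite D" using finb by (simp add: D_def)
  have sD: "spt (F x) \<subseteq> D" using FB_spt by (auto simp: D_def split: if_splits)
  have n1: "T i \<notin> E i \<beta>" by (auto simp: enc_eq)
  have n0: "0 \<notin> insert (T i) (E i \<beta>)" by auto
  have e1: "sum (F x) D = F x 0 + sum (F x) (insert (T i) (E i \<beta>))"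
    unfolding D_def by (rule sum.insert) (use finb n0 in auto)
  have e2: "sum (F x) (insert (T i) (E i \<beta>)) = F x (T i) + sum (F x) (E i \<beta>)"
    by (rule sum.insert) (use finb n1 in auto)
  have "sum (F x) D = 1"
    using e1 e2 FB0 FBT sumE cc_arith[of s] s0 s_le unfolding s_def[symmetric] by simp
  then have sum1: "sum (F x) (spt (F x)) = 1" using sum_spt[OF finD sD] by simp
  have Rin: "(if s \<le> 1/2 then insert 0 (E i \<beta>) else insert (T i) (E i \<beta>)) \<in> R"
    using R_I[OF i b, of "{0}"] R_I[OF i b, of "{1}"] by (simp add: enc_img image_image)
  have sR: "spt (F x) \<in> R" using dclosedD[OF dc_R Rin] FB_spt by (simp add: s_def)
  have nnF: "0 \<le> F x w" for w
  proof (cases "w \<in> spt (F x)")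
    case False then show ?thesis by (simp add: spt_def)
  next
    case True
    then have "w \<in> D" using sD by blast
    then show ?thesis using FB0 FBT FBE nn cc_nonneg s0 unfolding D_def
      by (auto simp: min_def intro!: mult_nonneg_nonneg)
  qed
  show ?thesis using nnF sum1 sR finite_subset[OF sD finD] by (auto simp: real_iff)
qed

end

lemma F_real: "x \<in> realization LK \<Longrightarrow> F x \<in> realization R"
  by (cases rule: LK_cases) (auto simp: F_caseA e0_real FB_real)

definition SL :: "(nat \<Rightarrow> real) \<Rightarrow> nat \<Rightarrow> real" where "SL = stretch (p ` I) q"
definition SR :: "(nat \<Rightarrow> real) \<Rightarrow> nat \<Rightarrow> real" where "SR = stretch ((\<lambda>i. T i) ` I) 0"

lemma one_LK:
  assumes s: "\<sigma> \<in> LK" and a: "a \<in> \<sigma>" "a \<in> p ` I" and b: "b \<in> \<sigma>" "b \<in> insert q (p ` I)"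
  shows "a = b"
  using s
proof (cases rule: LK_E)
  case (cone \<alpha> \<tau>)
  obtain j where j: "j \<in> I" "a = p j" using a by blast
  have "a \<notin> \<alpha>" using p_A0[OF j(1)] cone(2) j(2) by blast
  moreover have "a \<notin> \<tau>" using pq[OF j(1)] cone(3) j(2) by blast
  ultimately show ?thesis using a cone(1) by blast
next
  case (apex i \<beta> \<tau>)
  have na: "a \<notin> sh i ` \<beta>" using a(2) sh_p[OF apex(1)] by (auto simp: image_iff) (metis)
  have nb: "b \<notin> sh i ` \<beta>" using b(2) sh_p[OF apex(1)] sh_q[OF apex(1)] by (auto simp: image_iff)
  have "a \<in> \<tau>" "b \<in> \<tau>" using a b na nb apex(4) by blast+
  then show ?thesis using apex(3) by blast
qed

lemma one_R:
  assumes s: "\<sigma> \<in> R" and a: "a \<in> \<sigma>" "a \<in> (\<lambda>i. T i) ` I" and b: "b \<in> \<sigma>" "b \<in> insert 0 ((\<lambda>i. T i) ` I)"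
  shows "a = b"
proof -
  obtain i \<beta> \<tau> where r: "i \<in> I" "\<beta> \<in> B i" "\<tau> \<in> {{},{0},{1}}" "\<sigma> = wedge_enc i ` ((\<lambda>v. v + 2) ` \<beta> \<union> \<tau>)"
    using s by (rule R_E)
  obtain j where j: "a = T j" using a by blast
  obtain u where u: "u \<in> (\<lambda>v. v + 2) ` \<beta> \<union> \<tau>" "a = wedge_enc i u" using a(1) r(4) by blast
  have "u = 1" "j = i" using u(2) j by (auto simp: enc_eq)
  then have t1: "\<tau> = {1}" using u(1) r(3) by auto
  obtain u' where u': "u' \<in> (\<lambda>v. v + 2) ` \<beta> \<union> \<tau>" "b = wedge_enc i u'" using b(1) r(4) by blast
  have "u' = 1" using u' t1 b(2) by (auto simp: enc_eq)
  then show ?thesis using u(2) u'(2) \<open>u = 1\<close> by simp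
qed

lemma SL_real: "x \<in> realization LK \<Longrightarrow> SL x \<in> realization LK"
  unfolding SL_def
  by (rule stretch_real[OF _ _ one_LK dc_LK]) (use finI pq in auto)

lemma SR_real: "x \<in> realization R \<Longrightarrow> SR x \<in> realization R"
  unfolding SR_def
  by (rule stretch_real[OF _ _ one_R dc_R]) (use finI in auto)

lemma SL_cont: "continuous_on S SL"
  unfolding SL_def by (rule stretch_cont) (use finI in auto)

lemma SR_cont: "continuous_on S SR"
  unfolding SR_def by (rule stretch_cont) (use finI in auto)

lemma F_cont': "continuous_on S F" by (rule F_cont)

lemma GF_cont: "continuous_on S (G \<circ> F)"
  by (rule continuous_on_compose[OF F_cont G_cont])

lemma FG_cont: "continuous_on S (F \<circ> G)"
  by (rule continuous_on_compose[OF G_cont F_cont])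

lemma H1: "homotopic_with_canon (\<lambda>h. True) (realization LK) (realization LK) (G \<circ> F) id"
proof -
  have h1: "homotopic_with_canon (\<lambda>h. True) (realization LK) (realization LK) id SL"
  proof (rule carrier_homotopic[OF dc_LK])
    show "continuous_on (realization LK) id" by (simp add: id_def continuous_on_id)
    show "id ` realization LK \<subseteq> realization LK" by simp
    show "continuous_on (realization LK) SL" by (rule SL_cont)
    show "SL ` realization LK \<subseteq> realization LK" using SL_real by blast
    fix x assume x: "x \<in> realization LK"
    have "spt (SL x) \<subseteq> spt x" unfolding SL_def by (rule stretch_spt) (use x in \<open>auto simp: real_iff\<close>)
    then show "spt (id x) \<union> spt (SL x) \<in> LK" using x by (auto simp: real_iff Un_absorb2)
  qed
  have h2: "homotopic_with_canon (\<lambda>h. True) (realization LK) (realization LK) SL (G \<circ> F)"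
  proof (rule carrier_homotopic[OF dc_LK])
    show "continuous_on (realization LK) SL" by (rule SL_cont)
    show "SL ` realization LK \<subseteq> realization LK" using SL_real by blast
    show "continuous_on (realization LK) (G \<circ> F)" by (rule GF_cont)
    show "(G \<circ> F) ` realization LK \<subseteq> realization LK" using G_real F_real by auto
    fix x assume x: "x \<in> realization LK"
    have nn: "\<forall>v. 0 \<le> x v" and K: "spt x \<in> LK" using x by (auto simp: real_iff)
    have sSL: "spt (SL x) \<subseteq> spt x" unfolding SL_def by (rule stretch_spt[OF nn])
    have sGF: "spt ((G \<circ> F) x) = phi ` spt (F x)" using G_spt[OF F_real[OF x]] by simp
    from x show "spt (SL x) \<union> spt ((G \<circ> F) x) \<in> LK"
    proof (cases rule: LK_cases)
      case A
      then obtain \<alpha> where al: "\<alpha> \<in> A0" "spt x \<subseteq> insert q \<alpha>" by blast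
      have "spt e0 = {0}" by (auto simp: spt_def e0_def)
      then have "spt ((G \<circ> F) x) = {q}" using sGF F_caseA[OF A(1)] by simp
      then have "spt (SL x) \<union> spt ((G \<circ> F) x) \<subseteq> \<alpha> \<union> {q}" using sSL al by blast
      moreover have "\<alpha> \<union> {q} \<in> LK" by (rule LK_I1[OF al(1)]) simp
      ultimately show ?thesis using dclosedD[OF dc_LK] by blast
    next
      case (B i \<beta>)
      have shA: "sh i ` \<beta> \<in> A0" using sh_A0 B by blast
      have FS: "spt (F x) \<subseteq> (if x (p i) \<le> 1/2 then insert 0 (E i \<beta>) else insert (T i) (E i \<beta>))"
        by (rule FB_spt[OF x B(1) B(2) B(3) B(4)])
      show ?thesis
      proof (cases "x (p i) \<le> 1/2")
        case True
        have "SL x (p i) = 0" unfolding SL_def by (rule stretch_small) (use B(1) True in auto)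
        then have "spt (SL x) \<subseteq> sh i ` \<beta>" using sSL B(3) by (auto simp: spt_def)
        moreover have "spt ((G \<circ> F) x) \<subseteq> insert q (sh i ` \<beta>)"
          using FS True sGF by (auto simp: image_image)
        ultimately have "spt (SL x) \<union> spt ((G \<circ> F) x) \<subseteq> sh i ` \<beta> \<union> {q}" by blast
        moreover have "sh i ` \<beta> \<union> {q} \<in> LK" by (rule LK_I1[OF shA]) simp
        ultimately show ?thesis using dclosedD[OF dc_LK] by blast
      next
        case False
        have "spt ((G \<circ> F) x) \<subseteq> insert (p i) (sh i ` \<beta>)"
          using FS False sGF by (auto simp: image_image)
        then have "spt (SL x) \<union> spt ((G \<circ> F) x) \<subseteq> spt x" using sSL B(3) by blast
        then show ?thesis using dclosedD[OF dc_LK K] by blast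
      qed
    qed
  qed
  have "homotopic_with_canon (\<lambda>h. True) (realization LK) (realization LK) id (G \<circ> F)"
    by (rule homotopic_with_trans[OF h1 h2])
  then show ?thesis by (simp add: homotopic_with_sym)
qed


lemma G_val: "z \<in> realization R \<Longrightarrow> G z u = (\<Sum>w\<in>{w\<in>spt z. phi w = u}. z w)"
  unfolding G_def by (rule push_spt_eq[OF fin_WR]) (use R_WR in \<open>auto simp: real_iff\<close>)

lemma H2: "homotopic_with_canon (\<lambda>h. True) (realization R) (realization R) (F \<circ> G) id"
proof -
  have h1: "homotopic_with_canon (\<lambda>h. True) (realization R) (realization R) id SR"
  proof (rule carrier_homotopic[OF dc_R])
    show "continuous_on (realization R) id" by (simp add: id_def continuous_on_id)
    show "id ` realization R \<subseteq> realization R" by simp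
    show "continuous_on (realization R) SR" by (rule SR_cont)
    show "SR ` realization R \<subseteq> realization R" using SR_real by blast
    fix x assume x: "x \<in> realization R"
    have "spt (SR x) \<subseteq> spt x" unfolding SR_def by (rule stretch_spt) (use x in \<open>auto simp: real_iff\<close>)
    then show "spt (id x) \<union> spt (SR x) \<in> R" using x by (auto simp: real_iff Un_absorb2)
  qed
  have h2: "homotopic_with_canon (\<lambda>h. True) (realization R) (realization R) SR (F \<circ> G)"
  proof (rule carrier_homotopic[OF dc_R])
    show "continuous_on (realization R) SR" by (rule SR_cont)
    show "SR ` realization R \<subseteq> realization R" using SR_real by blast
    show "continuous_on (realization R) (F \<circ> G)" by (rule FG_cont)
    show "(F \<circ> G) ` realization R \<subseteq> realization R" using G_real F_real by auto
    fix z assume z: "z \<in> realization R"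
    have nn: "\<forall>v. 0 \<le> z v" and K: "spt z \<in> R" using z by (auto simp: real_iff)
    have sSR: "spt (SR z) \<subseteq> spt z" unfolding SR_def by (rule stretch_spt[OF nn])
    have xL: "G z \<in> realization LK" by (rule G_real[OF z])
    have sG: "spt (G z) = phi ` spt z" by (rule G_spt[OF z])
    obtain i \<beta> \<tau> where r: "i \<in> I" "\<beta> \<in> B i" "\<tau> \<in> {{},{0},{1}}" "spt z = wedge_enc i ` ((\<lambda>v. v + 2) ` \<beta> \<union> \<tau>)"
      using K by (rule R_E)
    have phiE: "phi ` E i \<beta> = sh i ` \<beta>" by (auto simp: image_image)
    show "spt (SR z) \<union> spt ((F \<circ> G) z) \<in> R"
    proof (cases "\<tau> = {1}")
      case False
      then have t0: "\<tau> \<subseteq> {0}" using r(3) by auto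
      have sz: "spt z \<subseteq> insert 0 (E i \<beta>)" using r(4) t0 by auto
      have zT: "\<forall>j\<in>I. z (T j) = 0"
      proof
        fix j assume "j \<in> I"
        have "T j \<notin> insert 0 (E i \<beta>)" by (auto simp: enc_eq)
        then show "z (T j) = 0" using sz by (auto simp: spt_def)
      qed
      have "SR z = z" unfolding SR_def by (rule stretch_id) (use zT in auto)
      have "phi ` spt z \<subseteq> phi ` insert 0 (E i \<beta>)" using sz by (rule image_mono)
      also have "phi ` insert 0 (E i \<beta>) = insert q (sh i ` \<beta>)" using phiE by simp
      finally have sGz: "spt (G z) \<subseteq> insert q (sh i ` \<beta>)" using sG by simp
      have "\<forall>j\<in>I. G z (p j) = 0"
      proof
        fix j assume j: "j \<in> I"
        have "p j \<notin> sh i ` \<beta>" using sh_p[OF r(1) j] by (metis imageE)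
        then have "p j \<notin> spt (G z)" using sGz pq[OF j] by blast
        then show "G z (p j) = 0" by (simp add: spt_def)
      qed
      then have "F (G z) = e0" by (rule F_caseA)
      moreover have "spt e0 = {0}" by (auto simp: spt_def e0_def)
      ultimately have "spt (SR z) \<union> spt ((F \<circ> G) z) \<subseteq> insert 0 (E i \<beta>)"
        using \<open>SR z = z\<close> sz by simp
      moreover have "insert 0 (E i \<beta>) \<in> R"
        using R_I[OF r(1) r(2), of "{0}"] by (simp add: enc_img image_image)
      ultimately show ?thesis using dclosedD[OF dc_R] by blast
    next
      case True
      have sz: "spt z = insert (T i) (E i \<beta>)" using r(4) True enc_img[of i \<beta> 1] by simp
      have sx: "spt (G z) = insert (p i) (sh i ` \<beta>)" using sG sz phiE by simp
      have "{w\<in>spt z. phi w = p i} = {T i}"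
      proof -
        have "phi w \<noteq> p i" if "w \<in> E i \<beta>" for w using that sh_p[OF r(1) r(1)] by auto
        then show ?thesis using sz by auto
      qed
      then have Gp: "G z (p i) = z (T i)" using G_val[OF z] by simp
      have zpos: "z (T i) > 0" using sz nn by (auto simp: spt_def less_le)
      have FS: "spt (F (G z)) \<subseteq> (if G z (p i) \<le> 1/2 then insert 0 (E i \<beta>) else insert (T i) (E i \<beta>))"
        by (rule FB_spt[OF xL r(1) r(2) sx]) (use Gp zpos in simp)
      show ?thesis
      proof (cases "z (T i) \<le> 1/2")
        case True
        have "SR z (T i) = 0" unfolding SR_def by (rule stretch_small) (use r(1) True in auto)
        then have "spt (SR z) \<subseteq> E i \<beta>" using sSR sz by (auto simp: spt_def)
        then have "spt (SR z) \<union> spt ((F \<circ> G) z) \<subseteq> insert 0 (E i \<beta>)" using FS True Gp by auto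
        moreover have "insert 0 (E i \<beta>) \<in> R"
          using R_I[OF r(1) r(2), of "{0}"] by (simp add: enc_img image_image)
        ultimately show ?thesis using dclosedD[OF dc_R] by blast
      next
        case False
        have "spt (SR z) \<union> spt ((F \<circ> G) z) \<subseteq> spt z" using FS False Gp sSR sz by auto
        then show ?thesis using dclosedD[OF dc_R K] by blast
      qed
    qed
  qed
  have "homotopic_with_canon (\<lambda>h. True) (realization R) (realization R) id (F \<circ> G)"
    by (rule homotopic_with_trans[OF h1 h2])
  then show ?thesis by (simp add: homotopic_with_sym)
qed

theorem main_equiv: "top_of_set (realization LK) homotopy_equivalent_space top_of_set (realization R)"
  unfolding homotopy_equivalent_space_def
proof (intro exI conjI)
  show "continuous_map (top_of_set (realization LK)) (top_of_set (realization R)) F"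
    using F_cont F_real by auto
  show "continuous_map (top_of_set (realization R)) (top_of_set (realization LK)) G"
    using G_cont G_real by auto
  show "homotopic_with (\<lambda>x. True) (top_of_set (realization LK)) (top_of_set (realization LK)) (G \<circ> F) id"
    by (rule H1)
  show "homotopic_with (\<lambda>x. True) (top_of_set (realization R)) (top_of_set (realization R)) (F \<circ> G) id"
    by (rule H2)
qed

end

definition A0c :: "nat \<Rightarrow> nat \<Rightarrow> nat set set" where
  "A0c k n = {\<sigma>. \<sigma> \<subseteq> {k+1..n} \<and> (\<forall>i\<in>\<sigma>. \<forall>j\<in>\<sigma>. i < j \<longrightarrow> k \<le> j - i)}"

lemma indep_dc: "dclosed (indep_L k m)"
  unfolding dclosed_def indep_L_def by blast

lemma indep_mem: "\<sigma> \<in> indep_L k m \<longleftrightarrow> \<sigma> \<subseteq> {1..nat m} \<and> (\<forall>i\<in>\<sigma>. \<forall>j\<in>\<sigma>. i < j \<longrightarrow> k \<le> j - i)"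
  unfolding indep_L_def by blast

lemma inst:
  fixes k n :: nat
  assumes k: "k \<ge> 2" and n: "n > 1"
  shows "cw {1..<min k n} 1 (\<lambda>i. i+1) (A0c k n) (\<lambda>i. indep_L k (int n - int k - int i)) (\<lambda>i v. v + i + k)"
proof
  show "finite {1..<min k n}" by simp
  show "{1..<min k n} \<noteq> {}" using k n by auto
  show "dclosed (A0c k n)" unfolding dclosed_def A0c_def by blast
  show "1 \<notin> \<Union> (A0c k n)"
  proof
    assume "1 \<in> \<Union> (A0c k n)"
    then obtain x where "x \<in> A0c k n" "1 \<in> x" by blast
    then have "1 \<in> {k+1..n}" by (auto simp: A0c_def)
    then show False using k by simp
  qed
  show "i + 1 \<notin> \<Union> (A0c k n)" if "i \<in> {1..<min k n}" for i using that unfolding A0c_def by auto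
  show "i + 1 \<noteq> 1" if "i \<in> {1..<min k n}" for i using that by auto
  show "inj_on (\<lambda>i. i + 1) {1..<min k n}" by (auto simp: inj_on_def)
  show "dclosed (indep_L k (int n - int k - int i))" for i by (rule indep_dc)
  show "finite (\<Union> (indep_L k (int n - int k - int i)))" for i
    by (rule finite_subset[of _ "{1..nat (int n - int k - int i)}"]) (auto simp: indep_L_def)
  show "{} \<in> indep_L k (int n - int k - int i)" for i by (simp add: indep_L_def)
  show "inj (\<lambda>v. v + i + k)" for i by (auto simp: inj_on_def)
  show "(\<lambda>v. v + i + k) ` \<beta> \<in> A0c k n"
    if "i \<in> {1..<min k n}" "\<beta> \<in> indep_L k (int n - int k - int i)" for i \<beta>
  proof -
    have b: "\<beta> \<subseteq> {1..nat (int n - int k - int i)}" and ind: "\<forall>a\<in>\<beta>. \<forall>b\<in>\<beta>. a < b \<longrightarrow> k \<le> b - a"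
      using that(2) by (auto simp: indep_L_def)
    have "(\<lambda>v. v + i + k) ` \<beta> \<subseteq> {k+1..n}"
    proof
      fix u assume "u \<in> (\<lambda>v. v + i + k) ` \<beta>"
      then obtain v where v: "v \<in> \<beta>" "u = v + i + k" by blast
      have "1 \<le> v" "v \<le> nat (int n - int k - int i)" using b v(1) by auto
      then show "u \<in> {k+1..n}" using v(2) by auto
    qed
    moreover have "\<forall>a\<in>(\<lambda>v. v + i + k) ` \<beta>. \<forall>b\<in>(\<lambda>v. v + i + k) ` \<beta>. a < b \<longrightarrow> k \<le> b - a"
      using ind by fastforce
    ultimately show ?thesis unfolding A0c_def by blast
  qed
  show "v + i + k \<noteq> 1" if "i \<in> {1..<min k n}" for i v using that k by auto
  show "v + i + k \<noteq> j + 1" if "i \<in> {1..<min k n}" "j \<in> {1..<min k n}" for i j v using that by auto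
qed

lemma LK_inst:
  fixes k n :: nat
  assumes k: "k \<ge> 2" and n: "n > 1"
  shows "cw.LK {1..<min k n} 1 (\<lambda>i. i+1) (A0c k n) (\<lambda>i. indep_L k (int n - int k - int i)) (\<lambda>i v. v + i + k)
     = indep_L k (int n)"
proof -
  interpret C: cw "{1..<min k n}" 1 "\<lambda>i. i+1" "A0c k n" "\<lambda>i. indep_L k (int n - int k - int i)" "\<lambda>i v. v + i + k"
    by (rule inst[OF k n])
  show ?thesis
  proof (intro set_eqI iffI)
    fix \<sigma> assume "\<sigma> \<in> C.LK"
    then show "\<sigma> \<in> indep_L k (int n)"
    proof (cases rule: C.LK_E)
      case (cone \<alpha> \<tau>)
      have a: "\<alpha> \<subseteq> {k+1..n}" "\<forall>a\<in>\<alpha>. \<forall>b\<in>\<alpha>. a < b \<longrightarrow> k \<le> b - a" using cone(2) by (auto simp: A0c_def)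
      have "\<sigma> \<subseteq> {1..n}" using a(1) cone(1,3) n by auto
      moreover have "\<forall>a\<in>\<sigma>. \<forall>b\<in>\<sigma>. a < b \<longrightarrow> k \<le> b - a"
      proof (intro ballI impI)
        fix a b assume ab: "a \<in> \<sigma>" "b \<in> \<sigma>" "a < b"
        show "k \<le> b - a"
        proof (cases "a \<in> \<alpha> \<and> b \<in> \<alpha>")
          case True then show ?thesis using a(2) ab by blast
        next
          case False
          then have "a = 1 \<or> b = 1" using ab cone(1,3) by blast
          have ge: "\<forall>t\<in>\<alpha>. k + 1 \<le> t" using a(1) by auto
          have "a = 1" "b \<in> \<alpha>" using \<open>a = 1 \<or> b = 1\<close> ab cone(1,3) ge k by auto
          then show ?thesis using ge by auto
        qed
      qed
      ultimately show ?thesis by (simp add: indep_L_def)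
    next
      case (apex i \<beta> \<tau>)
      have b: "\<beta> \<subseteq> {1..nat (int n - int k - int i)}" and ind: "\<forall>a\<in>\<beta>. \<forall>b\<in>\<beta>. a < b \<longrightarrow> k \<le> b - a"
        using apex(2) by (auto simp: indep_L_def)
      have sub: "(\<lambda>v. v + i + k) ` \<beta> \<subseteq> {i+k+1..n}"
      proof
        fix u assume "u \<in> (\<lambda>v. v + i + k) ` \<beta>"
        then obtain v where v: "v \<in> \<beta>" "u = v + i + k" by blast
        have "1 \<le> v" "v \<le> nat (int n - int k - int i)" using b v(1) by auto
        then show "u \<in> {i+k+1..n}" using v(2) by auto
      qed
      have i: "1 \<le> i" "i < k" "i < n" using apex(1) by auto
      have "\<sigma> \<subseteq> {1..n}" using sub apex(3,4) i by auto
      moreover have "\<forall>a\<in>\<sigma>. \<forall>b\<in>\<sigma>. a < b \<longrightarrow> k \<le> b - a"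
      proof (intro ballI impI)
        fix a b assume ab: "a \<in> \<sigma>" "b \<in> \<sigma>" "a < b"
        show "k \<le> b - a"
        proof (cases "a \<in> (\<lambda>v. v + i + k) ` \<beta> \<and> b \<in> (\<lambda>v. v + i + k) ` \<beta>")
          case True
          then obtain va vb where vv: "va \<in> \<beta>" "vb \<in> \<beta>" "a = va + i + k" "b = vb + i + k" by blast
          then have "va < vb" using ab(3) by simp
          then have "k \<le> vb - va" using ind vv(1,2) by blast
          then show ?thesis using vv(3,4) by simp
        next
          case False
          then have "a = i + 1 \<or> b = i + 1" using ab apex(3,4) by blast
          then have "a = i + 1" "b \<in> (\<lambda>v. v + i + k) ` \<beta>" using ab apex(3,4) sub by auto
          then obtain v where v: "v \<in> \<beta>" "b = v + i + k" by blast
          have "1 \<le> v" using b v(1) by (auto simp: subset_iff)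
          then show ?thesis using v(2) \<open>a = i + 1\<close> by simp
        qed
      qed
      ultimately show ?thesis by (simp add: indep_L_def)
    qed
  next
    fix \<sigma> assume s: "\<sigma> \<in> indep_L k (int n)"
    have sn: "\<sigma> \<subseteq> {1..n}" and ind: "\<forall>a\<in>\<sigma>. \<forall>b\<in>\<sigma>. a < b \<longrightarrow> k \<le> b - a"
      using s by (auto simp: indep_L_def)
    show "\<sigma> \<in> C.LK"
    proof (cases "\<sigma> \<inter> {1..min k n} = {}")
      case True
      have "\<sigma> \<subseteq> {k+1..n}" using True sn by fastforce
      then have "\<sigma> \<in> A0c k n" using ind by (auto simp: A0c_def)
      then show ?thesis using C.LK_I1[of \<sigma> "{}"] by simp
    next
      case False
      then obtain j where "j \<in> \<sigma> \<inter> {1..min k n}" by blast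
      then have j: "j \<in> \<sigma>" "1 \<le> j" "j \<le> min k n" by auto
      have big: "u \<ge> j + k" if "u \<in> \<sigma>" "u \<noteq> j" for u
      proof (cases "u < j")
        case True
        then have "k \<le> j - u" using ind j(1) that(1) by blast
        moreover have "1 \<le> u" using sn that(1) by auto
        ultimately show ?thesis using j(3) True by arith
      next
        case False
        then have "j < u" using that(2) by simp
        then show ?thesis using ind j(1) that(1) by fastforce
      qed
      define \<rho> where "\<rho> = \<sigma> - {j}"
      have sig: "\<sigma> = \<rho> \<union> {j}" using j(1) by (auto simp: \<rho>_def)
      show ?thesis
      proof (cases "j = 1")
        case True
        have "\<rho> \<subseteq> {k+1..n}"
        proof
          fix u assume u: "u \<in> \<rho>"
          then have "u \<in> \<sigma>" "u \<noteq> j" by (auto simp: \<rho>_def)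
          then have "u \<ge> j + k" "u \<le> n" using big sn by auto
          then show "u \<in> {k+1..n}" using True by simp
        qed
        moreover have "\<forall>a\<in>\<rho>. \<forall>b\<in>\<rho>. a < b \<longrightarrow> k \<le> b - a" using ind by (auto simp: \<rho>_def)
        ultimately have "\<rho> \<in> A0c k n" by (simp add: A0c_def)
        then show ?thesis using C.LK_I1[of \<rho> "{1}"] sig True by simp
      next
        case False
        define i where "i = j - 1"
        have i: "i \<in> {1..<min k n}" "j = i + 1" using False j by (auto simp: i_def)
        define \<beta> where "\<beta> = (\<lambda>u. u - (i + k)) ` \<rho>"
        have rr: "u - (i + k) + i + k = u" if "u \<in> \<rho>" for u
        proof -
          have "u \<in> \<sigma>" "u \<noteq> j" using that by (auto simp: \<rho>_def)
          then have "u \<ge> j + k" by (rule big)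
          then show ?thesis using i(2) by simp
        qed
        have "(\<lambda>u. u - (i + k) + i + k) ` \<rho> = (\<lambda>u. u) ` \<rho>"
          by (rule image_cong[OF refl]) (rule rr)
        then have rb: "(\<lambda>v. v + i + k) ` \<beta> = \<rho>"
          unfolding \<beta>_def image_image by simp
        have "\<beta> \<in> indep_L k (int n - int k - int i)"
        proof -
          have "\<beta> \<subseteq> {1..nat (int n - int k - int i)}"
          proof
            fix v assume "v \<in> \<beta>"
            then obtain u where u: "u \<in> \<rho>" "v = u - (i + k)" by (auto simp: \<beta>_def)
            have "u \<ge> j + k" "u \<le> n" using big u(1) sn by (auto simp: \<rho>_def)
            then have "1 \<le> v" "int v \<le> int n - int k - int i" using u(2) i(2) by arith+
            then show "v \<in> {1..nat (int n - int k - int i)}" by auto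
          qed
          moreover have "\<forall>a\<in>\<beta>. \<forall>b\<in>\<beta>. a < b \<longrightarrow> k \<le> b - a"
          proof (intro ballI impI)
            fix a b assume ab: "a \<in> \<beta>" "b \<in> \<beta>" "a < b"
            obtain ua where ua: "ua \<in> \<rho>" "a = ua - (i + k)" using ab(1) by (auto simp: \<beta>_def)
            obtain ub where ub: "ub \<in> \<rho>" "b = ub - (i + k)" using ab(2) by (auto simp: \<beta>_def)
            have "ua \<ge> j + k" "ub \<ge> j + k" using big ua(1) ub(1) by (auto simp: \<rho>_def)
            moreover have "ua \<in> \<sigma>" "ub \<in> \<sigma>" using ua(1) ub(1) by (auto simp: \<rho>_def)
            ultimately have "ua < ub" using ab(3) ua(2) ub(2) i(2) by arith
            then have "k \<le> ub - ua" using ind \<open>ua \<in> \<sigma>\<close> \<open>ub \<in> \<sigma>\<close> by blast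
            then show "k \<le> b - a" using ua(2) ub(2) \<open>ua \<ge> j + k\<close> \<open>ub \<ge> j + k\<close> i(2) by arith
          qed
          ultimately show ?thesis by (simp add: indep_L_def)
        qed
        then have "(\<lambda>v. v + i + k) ` \<beta> \<union> {i + 1} \<in> C.LK" by (rule C.LK_I2[OF i(1)]) simp
        then show ?thesis using rb sig i(2) by simp
      qed
    qed
  qed
qed


theorem corollary3p8:
  fixes k n :: nat
  assumes "k \<ge> 2" and "n > 1"
  shows "(top_of_set (realization (indep_L k (int n))))
           homotopy_equivalent_space
         (top_of_set (realization (wedge {1..<min k n}
              (\<lambda>i. susp (indep_L k (int n - int k - int i))))))"
proof -
  interpret C: cw "{1..<min k n}" 1 "\<lambda>i. i+1" "A0c k n" "\<lambda>i. indep_L k (int n - int k - int i)" "\<lambda>i v. v + i + k"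
    by (rule inst[OF assms])
  have "C.LK = indep_L k (int n)" by (rule LK_inst[OF assms])
  moreover have "C.R = wedge {1..<min k n} (\<lambda>i. susp (indep_L k (int n - int k - int i)))"
    using C.R_def by simp
  ultimately show ?thesis using C.main_equiv by simp
qed

end
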